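(* Let $\mathbf k=(k_1,\ldots,k_r)\in\mathbb N^r$, $\mathbf m=(m_1,\ldots,m_p)\in\mathbb N^p$ with $m_p\ge2$, $\boldsymbol\eta\in\{\pm1\}^r$, $\boldsymbol\varepsilon\in\{\pm1\}^p$, and $\underline\eta=\eta_1\cdots\eta_r$. Then \[ M\big(m_p,\ldots,m_1,k_1+1,k_2,\ldots,k_r;\underline\eta\,\mathbf q(\boldsymbol\varepsilon),\mathbf p(\boldsymbol\eta)\big) =\sum_{j=1}^p(-1)^{j-1}M\big(m_p,\ldots,m_j;\mathbf q(\varepsilon_{j+1},\ldots,\varepsilon_p),1\big)\,M\Big(\big(\mathbf k;\mathbf p(\boldsymbol\eta)\big)\circledast\big(1,m_1,\ldots,m_{j-1};\mathbf p(\varepsilon_1,\ldots,\varepsilon_j)\big)^\star\Big) \] \[ +\sum_{j=1}^p(-1)^{j-1}M\big(m_p,\ldots,m_j;-\mathbf q(\varepsilon_{j+1},\ldots,\varepsilon_p),-1\big)\,M\Big(\big(\mathbf k;\mathbf p(\boldsymbol\eta)\big)\circledast\big(1,m_1,\ldots,m_{j-1};-\mathbf p(\varepsilon_1,\ldots,\varepsilon_j)\big)^\star\Big) +2(-1)^pM\Big(\big(\mathbf k;\mathbf p(\boldsymbol\eta)\big)\circledast\big(1,\mathbf m;0,\underline\eta\,\mathbf r(\boldsymbol\varepsilon)\big)^\star\Big), \] where for $j=p$ the sign vectors $(\pm\mathbf q(\emptyset),\pm1)$ are just $(\pm1)$.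
   Context: For $\boldsymbol\varepsilon=(\varepsilon_1,\ldots,\varepsilon_r)\in\{\pm1\}^r$: $\mathbf p(\boldsymbol\varepsilon)=(\varepsilon_1\cdots\varepsilon_r,\varepsilon_2\cdots\varepsilon_r,\ldots,\varepsilon_r)$, $\mathbf q(\boldsymbol\varepsilon)=(\varepsilon_1\cdots\varepsilon_r,\ldots,\varepsilon_1\varepsilon_2,\varepsilon_1)$, $\mathbf r(\boldsymbol\varepsilon)=(\varepsilon_1,\varepsilon_1\varepsilon_2,\ldots,\varepsilon_1\cdots\varepsilon_r)$; $a\boldsymbol\varepsilon$ is componentwise. Multiple mixed value: $M(\mathbf k;\boldsymbol\varepsilon)=\sum_{n_1>\cdots>n_r>0}\prod_j(1+\varepsilon_j(-1)^{n_j})/n_j^{k_j}$ ($k_1\ge2$). $M_n$, $M^\star_n$ are the truncations to $n\ge n_1>\cdots$ resp. $n\ge n_1\ge\cdots\ge n_r\ge1$ (empty $=1$). Convoluted MMV: $M((\mathbf k;\boldsymbol\eta)\circledast(\mathbf l;\boldsymbol\varepsilon)^\star)=\sum_{n\ge1}\frac{M_{n-1}(k_2,\ldots,k_r;\eta_2,\ldots,\eta_r)M^\star_n(l_2,\ldots,l_s;\varepsilon_2,\ldots,\varepsilon_s)}{n^{k_1+l_1}}\cdot\frac{(1+\varepsilon_1(-1)^n)(1+\eta_1(-1)^n)}{2}$, for $\eta_1,\varepsilon_1\in\{\pm1,0\}$ not both $0$ and all other signs in $\{\pm1\}$. *)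

theory Defs
  imports Complex_Main
begin

text \<open>Sign vectors are lists of reals (entries in {-1,1}, or 0 where allowed).
  Lists are 0-indexed: the paper's index i corresponds to list position i-1.\<close>

definition pvec :: "real list \<Rightarrow> real list" where
  "pvec es = map (\<lambda>i. prod_list (drop i es)) [0..<length es]"

definition rvec :: "real list \<Rightarrow> real list" where
  "rvec es = map (\<lambda>i. prod_list (take (Suc i) es)) [0..<length es]"

definition qvec :: "real list \<Rightarrow> real list" where
  "qvec es = rev (rvec es)"

fun Mtr :: "nat \<Rightarrow> nat list \<Rightarrow> real list \<Rightarrow> real" where
  "Mtr n (k # ks) (e # es) =
     (\<Sum>m\<in>{1..n}. (1 + e * (-1) ^ m) / real m ^ k * Mtr (m - 1) ks es)"
| "Mtr n _ _ = 1"

fun Mst :: "nat \<Rightarrow> nat list \<Rightarrow> real list \<Rightarrow> real" where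
  "Mst n (k # ks) (e # es) =
     (\<Sum>m\<in>{1..n}. (1 + e * (-1) ^ m) / real m ^ k * Mst m ks es)"
| "Mst n _ _ = 1"

text \<open>Multiple mixed value: limit of the (monotone, nonnegative) truncations.\<close>
definition MMV :: "nat list \<Rightarrow> real list \<Rightarrow> real" where
  "MMV ks es = lim (\<lambda>n. Mtr n ks es)"

definition CMMV :: "nat list \<Rightarrow> real list \<Rightarrow> nat list \<Rightarrow> real list \<Rightarrow> real" where
  "CMMV ks es ls fs =
     (\<Sum>i. let n = Suc i in
        Mtr (n - 1) (tl ks) (tl es) * Mst n (tl ls) (tl fs) / real n ^ (hd ks + hd ls)
        * ((1 + hd fs * (-1) ^ n) * (1 + hd es * (-1) ^ n) / 2))"

end

theory Submission
  imports Defs "HOL-Analysis.Summation_Tests"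
begin



fun Mgt :: "nat \<Rightarrow> nat \<Rightarrow> nat list \<Rightarrow> real list \<Rightarrow> real" where
  "Mgt N c (k # ks) (e # es) =
     (\<Sum>a\<in>{c<..N}. (1 + e * (-1) ^ a) / real a ^ k * Mgt (a - 1) c ks es)"
| "Mgt N c _ _ = 1"

lemma Mtr_Mgt: "Mtr n ks es = Mgt n 0 ks es"
  by (induction n ks es rule: Mtr.induct)
     (simp_all add: atLeastSucAtMost_greaterThanAtMost[of 0, simplified])

lemma swap_tri:
  fixes F :: "nat \<Rightarrow> nat \<Rightarrow> real"
  shows "(\<Sum>a\<in>{c<..N}. \<Sum>b\<in>{c<..a-1}. F a b) = (\<Sum>b\<in>{c<..N}. \<Sum>a\<in>{b<..N}. F a b)"
proof -
  have "(\<Sum>a\<in>{c<..N}. \<Sum>b\<in>{c<..a-1}. F a b) = (\<Sum>a\<in>{c<..N}. \<Sum>b\<in>{c<..N}. if b < a then F a b else 0)"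
  proof (rule sum.cong[OF refl])
    fix a assume "a \<in> {c<..N}"
    then have "{c<..a-1} = {b\<in>{c<..N}. b < a}" by auto
    then show "(\<Sum>b\<in>{c<..a-1}. F a b) = (\<Sum>b\<in>{c<..N}. if b < a then F a b else 0)"
      by (subst \<open>{c<..a-1} = _\<close>) (rule sum.inter_filter, simp)
  qed
  also have "\<dots> = (\<Sum>b\<in>{c<..N}. \<Sum>a\<in>{c<..N}. if b < a then F a b else 0)"
    by (rule sum.swap)
  also have "\<dots> = (\<Sum>b\<in>{c<..N}. \<Sum>a\<in>{b<..N}. F a b)"
  proof (rule sum.cong[OF refl])
    fix b assume "b \<in> {c<..N}"
    then have "{b<..N} = {a\<in>{c<..N}. b < a}" by auto
    then show "(\<Sum>a\<in>{c<..N}. if b < a then F a b else 0) = (\<Sum>a\<in>{b<..N}. F a b)"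
      by (subst \<open>{b<..N} = _\<close>) (rule sum.inter_filter[symmetric], simp)
  qed
  finally show ?thesis .
qed

lemma Mgt_append:
  assumes "length xs = length es"
  shows "Mgt N c (xs @ y # ys) (es @ f # fs) =
    (\<Sum>b\<in>{c<..N}. (1 + f * (-1) ^ b) / real b ^ y * Mgt (b - 1) c ys fs * Mgt N b xs es)"
  using assms
proof (induction xs es arbitrary: N rule: list_induct2)
  case Nil
  then show ?case by simp
next
  case (Cons x xs e es)
  have "Mgt N c ((x # xs) @ y # ys) ((e # es) @ f # fs) =
     (\<Sum>a\<in>{c<..N}. (1 + e * (-1) ^ a) / real a ^ x *
        (\<Sum>b\<in>{c<..a-1}. (1 + f * (-1) ^ b) / real b ^ y * Mgt (b - 1) c ys fs * Mgt (a-1) b xs es))"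
    using Cons.IH by simp
  also have "\<dots> = (\<Sum>a\<in>{c<..N}. \<Sum>b\<in>{c<..a-1}. (1 + f * (-1) ^ b) / real b ^ y * Mgt (b - 1) c ys fs *
        ((1 + e * (-1) ^ a) / real a ^ x * Mgt (a-1) b xs es))"
    by (simp add: sum_distrib_left mult_ac)
  also have "\<dots> = (\<Sum>b\<in>{c<..N}. \<Sum>a\<in>{b<..N}. (1 + f * (-1) ^ b) / real b ^ y * Mgt (b - 1) c ys fs *
        ((1 + e * (-1) ^ a) / real a ^ x * Mgt (a-1) b xs es))"
    by (rule swap_tri)
  also have "\<dots> = (\<Sum>b\<in>{c<..N}. (1 + f * (-1) ^ b) / real b ^ y * Mgt (b - 1) c ys fs * Mgt N b (x#xs) (e#es))"
    by (simp add: sum_distrib_left)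
  finally show ?case .
qed

lemma Mgt_snoc:
  assumes "length xs = length es"
  shows "Mgt N c (xs @ [y]) (es @ [f]) =
    (\<Sum>b\<in>{c<..N}. (1 + f * (-1) ^ b) / real b ^ y * Mgt N b xs es)"
  using Mgt_append[OF assms, of N c y "[]" f "[]"] by simp

lemma Mgt_tail:
  assumes "length ms = length ss" "b \<le> N"
  shows "Mgt N b (rev ms) (rev ss) =
    (\<Sum>j<length ms. (-1) ^ j * Mgt N 0 (rev (drop j ms)) (rev (drop j ss)) * Mst b (take j ms) (take j ss))
    + (-1) ^ length ms * Mst b ms ss"
  using assms
proof (induction ms ss arbitrary: b rule: list_induct2)
  case Nil
  then show ?case by simp
next
  case (Cons m1 ms s1 ss)
  let ?w = "\<lambda>a. (1 + s1 * (-1) ^ a) / real a ^ m1"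
  have L: "length (rev ms) = length (rev ss)" using Cons.hyps by simp
  have "Mgt N b (rev (m1#ms)) (rev (s1#ss)) = (\<Sum>a\<in>{b<..N}. ?w a * Mgt N a (rev ms) (rev ss))"
    using Mgt_snoc[OF L] by simp
  also have "{b<..N} = {0<..N} - {0<..b}" using Cons.prems by auto
  also have "(\<Sum>a\<in>{0<..N} - {0<..b}. ?w a * Mgt N a (rev ms) (rev ss)) =
     (\<Sum>a\<in>{0<..N}. ?w a * Mgt N a (rev ms) (rev ss)) - (\<Sum>a\<in>{0<..b}. ?w a * Mgt N a (rev ms) (rev ss))"
    using Cons.prems by (intro sum_diff) auto
  also have "(\<Sum>a\<in>{0<..N}. ?w a * Mgt N a (rev ms) (rev ss)) = Mgt N 0 (rev (m1#ms)) (rev (s1#ss))"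
    using Mgt_snoc[OF L] by simp
  also have "(\<Sum>a\<in>{0<..b}. ?w a * Mgt N a (rev ms) (rev ss)) =
     (\<Sum>a\<in>{0<..b}. ?w a * ((\<Sum>j<length ms. (-1) ^ j * Mgt N 0 (rev (drop j ms)) (rev (drop j ss)) * Mst a (take j ms) (take j ss))
    + (-1) ^ length ms * Mst a ms ss))"
    using Cons.IH Cons.prems by (intro sum.cong refl) auto
  also have "\<dots> = (\<Sum>j<length ms. (-1) ^ j * Mgt N 0 (rev (drop j ms)) (rev (drop j ss)) * (\<Sum>a\<in>{0<..b}. ?w a * Mst a (take j ms) (take j ss)))
    + (-1) ^ length ms * (\<Sum>a\<in>{0<..b}. ?w a * Mst a ms ss)"
  proof -
    have "(\<Sum>a\<in>{0<..b}. ?w a * ((\<Sum>j<length ms. (-1) ^ j * Mgt N 0 (rev (drop j ms)) (rev (drop j ss)) * Mst a (take j ms) (take j ss))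
    + (-1) ^ length ms * Mst a ms ss)) = (\<Sum>a\<in>{0<..b}. \<Sum>j<length ms. (-1) ^ j * Mgt N 0 (rev (drop j ms)) (rev (drop j ss)) * (?w a * Mst a (take j ms) (take j ss)))
     + (-1) ^ length ms * (\<Sum>a\<in>{0<..b}. ?w a * Mst a ms ss)"
      by (simp add: sum.distrib sum_distrib_left algebra_simps)
    also have "(\<Sum>a\<in>{0<..b}. \<Sum>j<length ms. (-1) ^ j * Mgt N 0 (rev (drop j ms)) (rev (drop j ss)) * (?w a * Mst a (take j ms) (take j ss)))
       = (\<Sum>j<length ms. \<Sum>a\<in>{0<..b}. (-1) ^ j * Mgt N 0 (rev (drop j ms)) (rev (drop j ss)) * (?w a * Mst a (take j ms) (take j ss)))"
      by (rule sum.swap)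
    finally show ?thesis by (simp add: sum_distrib_left)
  qed
  also have "\<dots> = (\<Sum>j<length ms. (-1) ^ j * Mgt N 0 (rev (drop (Suc j) (m1#ms))) (rev (drop (Suc j) (s1#ss))) * Mst b (take (Suc j) (m1#ms)) (take (Suc j) (s1#ss)))
    + (-1) ^ length ms * Mst b (m1#ms) (s1#ss)"
    by (simp add: atLeastSucAtMost_greaterThanAtMost[of 0, simplified])
  finally show ?case
    by (simp del: sum.lessThan_Suc add: sum.lessThan_Suc_shift sum_negf)
qed




lemma w_bounds:
  fixes e :: real assumes "\<bar>e\<bar> \<le> 1"
  shows "0 \<le> 1 + e * (-1) ^ a" "1 + e * (-1) ^ a \<le> 2"
  using assms by (cases "even a"; auto simp: abs_le_iff)+

lemma quart_step:
  fixes n :: nat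
  shows "real (Suc n) powr (1/4) / real (Suc n) \<le> 4 * (real (Suc n) powr (1/4) - real n powr (1/4))"
proof -
  define x where "x = real (Suc n) powr (1/4)"
  define y where "y = real n powr (1/4)"
  have x4: "x ^ 4 = real n + 1"
    unfolding x_def by (simp add: powr_powr flip: powr_realpow)
  have y4: "y ^ 4 = real n"
  proof (cases "n = 0")
    case True then show ?thesis by (simp add: y_def)
  next
    case False then show ?thesis unfolding y_def by (simp add: powr_powr flip: powr_realpow)
  qed
  have xp: "x > 0" unfolding x_def by simp
  have yp: "y \<ge> 0" unfolding y_def by simp
  have yx: "y \<le> x"
  proof (rule ccontr)
    assume "\<not> y \<le> x"
    then have "x ^ 4 < y ^ 4" using xp by (intro power_strict_mono) auto
    then show False using x4 y4 by simp
  qed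
  have "1 = (x - y) * (x^3 + x^2*y + x*y^2 + y^3)"
    using x4 y4 by (simp add: algebra_simps power2_eq_square power3_eq_cube power4_eq_xxxx)
  also have "\<dots> \<le> (x - y) * (4 * x^3)"
  proof (rule mult_left_mono)
    have "x^2*y \<le> x^3" using yx xp yp by (simp add: power2_eq_square power3_eq_cube mult_left_mono)
    moreover have "x*y^2 \<le> x^3" using yx xp yp by (simp add: power2_eq_square power3_eq_cube mult_mono mult_left_mono)
    moreover have "y^3 \<le> x^3" using yx yp by (intro power_mono) auto
    ultimately show "x^3 + x^2*y + x*y^2 + y^3 \<le> 4 * x^3" by simp
  qed (use yx in simp)
  finally have 1: "1 \<le> (x - y) * (4 * x ^ 3)" .
  have "real (Suc n) powr (1/4) / real (Suc n) = x / x^4" using x4 by (simp add: x_def)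
  also have "\<dots> = 1 / x^3" using xp by (simp add: power4_eq_xxxx power3_eq_cube)
  also have "\<dots> \<le> 4 * (x - y)"
  proof -
    have "1 \<le> (4 * (x - y)) * x ^ 3" using 1 by (simp add: algebra_simps)
    then show ?thesis by (rule pos_divide_le_eq[THEN iffD2, rotated]) (use xp in simp)
  qed
  finally show ?thesis by (simp add: x_def y_def)
qed

lemma sum_quart:
  "(\<Sum>a\<in>{1..n}. real a powr (1/4) / real a) \<le> 4 * real n powr (1/4)"
proof (induction n)
  case 0 then show ?case by simp
next
  case (Suc n)
  then show ?case using quart_step[of n] by simp
qed

lemma Mst_nonneg: "\<forall>e\<in>set es. \<bar>e\<bar> \<le> 1 \<Longrightarrow> 0 \<le> Mst n ks es"
proof (induction n ks es rule: Mst.induct)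
  case (1 n k ks e es)
  then show ?case using w_bounds[of e] by (auto intro!: sum_nonneg mult_nonneg_nonneg divide_nonneg_nonneg)
qed auto

lemma Mtr_nonneg: "\<forall>e\<in>set es. \<bar>e\<bar> \<le> 1 \<Longrightarrow> 0 \<le> Mtr n ks es"
proof (induction n ks es rule: Mtr.induct)
  case (1 n k ks e es)
  then show ?case using w_bounds[of e] by (auto intro!: sum_nonneg mult_nonneg_nonneg divide_nonneg_nonneg)
qed auto

lemma Mtr_mono:
  assumes "\<forall>e\<in>set es. \<bar>e\<bar> \<le> 1" "n \<le> n'"
  shows "Mtr n ks es \<le> Mtr n' ks es"
proof (cases "ks \<noteq> [] \<and> es \<noteq> []")
  case True
  then obtain k ks' e es' where E: "ks = k # ks'" "es = e # es'"
    by (metis list.exhaust)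
  show ?thesis unfolding E using assms E w_bounds[of e]
    by (auto intro!: sum_mono2 mult_nonneg_nonneg divide_nonneg_nonneg Mtr_nonneg)
next
  case False
  then show ?thesis by (cases ks; cases es) auto
qed

lemma term_bound:
  fixes e M C :: real and a k :: nat
  assumes "\<bar>e\<bar> \<le> 1" "k \<ge> 1" "a \<ge> 1" "0 \<le> M" "M \<le> C * real a powr (1/4)"
  shows "(1 + e * (-1) ^ a) / real a ^ k * M \<le> 2 * C * (real a powr (1/4) / real a)"
proof -
  have a1: "real a \<ge> 1" using assms by simp
  have "real a ^ 1 \<le> real a ^ k" using a1 assms by (intro power_increasing) auto
  then have ak: "real a \<le> real a ^ k" by simp
  have "(1 + e * (-1) ^ a) / real a ^ k * M \<le> 2 / real a * M"
    using w_bounds[OF assms(1), of a] ak a1 assms(4)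
    by (intro mult_right_mono frac_le) auto
  also have "\<dots> \<le> 2 / real a * (C * real a powr (1/4))"
    using assms a1 by (intro mult_left_mono) auto
  finally show ?thesis by simp
qed

lemma one_le_bound: "1 \<le> n \<Longrightarrow> 1 \<le> (8::real) ^ L * real n powr (1/4)"
proof -
  assume "1 \<le> n"
  then have "1 \<le> real n powr (1/4)" by (simp add: ge_one_powr_ge_zero)
  moreover have "1 \<le> (8::real) ^ L" by simp
  ultimately show ?thesis using mult_mono[of 1 "(8::real)^L" 1 "real n powr (1/4)"] by simp
qed

lemma Mst_bound:
  "\<forall>e\<in>set es. \<bar>e\<bar> \<le> 1 \<Longrightarrow> \<forall>k\<in>set ks. k \<ge> 1 \<Longrightarrow> 1 \<le> n \<Longrightarrow>
   Mst n ks es \<le> 8 ^ length ks * real n powr (1/4)"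
proof (induction n ks es rule: Mst.induct)
  case (1 n k ks e es)
  let ?C = "8 ^ length ks :: real"
  have "Mst n (k#ks) (e#es) \<le> (\<Sum>a\<in>{1..n}. 2 * ?C * (real a powr (1/4) / real a))"
    unfolding Mst.simps
    using 1 by (intro sum_mono term_bound Mst_nonneg) auto
  also have "\<dots> = 2 * ?C * (\<Sum>a\<in>{1..n}. real a powr (1/4) / real a)"
    by (simp add: sum_distrib_left)
  also have "\<dots> \<le> 2 * ?C * (4 * real n powr (1/4))"
    by (intro mult_left_mono sum_quart) auto
  finally show ?case by simp
qed (use one_le_bound[of _ 0] one_le_bound in auto)

lemma Mtr_bound:
  "\<forall>e\<in>set es. \<bar>e\<bar> \<le> 1 \<Longrightarrow> \<forall>k\<in>set ks. k \<ge> 1 \<Longrightarrow> 1 \<le> n \<Longrightarrow>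
   Mtr n ks es \<le> 8 ^ length ks * real n powr (1/4)"
proof (induction ks arbitrary: es n)
  case Nil
  then show ?case using one_le_bound[of n 0] by simp
next
  case (Cons k ks)
  show ?case
  proof (cases "es = []")
    case True
    then show ?thesis using Cons.prems one_le_bound[of n "Suc (length ks)"] by simp
  next
    case False
    then obtain e es' where Cons2: "es = e # es'" by (cases es) auto
    let ?C = "8 ^ length ks :: real"
    have "Mtr n (k#ks) (e#es') \<le> (\<Sum>a\<in>{1..n}. 2 * ?C * (real a powr (1/4) / real a))"
      unfolding Mtr.simps
    proof (intro sum_mono term_bound)
      fix a assume a: "a \<in> {1..n}"
      have "Mtr (a - 1) ks es' \<le> Mtr a ks es'"
        using Cons.prems Cons2 by (intro Mtr_mono) auto
      also have "\<dots> \<le> ?C * real a powr (1/4)"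
        using Cons.IH[of es' a] Cons.prems Cons2 a by auto
      finally show "Mtr (a - 1) ks es' \<le> ?C * real a powr (1/4)" .
    qed (use Cons.prems Cons2 Mtr_nonneg in auto)
    also have "\<dots> = 2 * ?C * (\<Sum>a\<in>{1..n}. real a powr (1/4) / real a)"
      by (simp add: sum_distrib_left)
    also have "\<dots> \<le> 2 * ?C * (4 * real n powr (1/4))"
      by (intro mult_left_mono sum_quart) auto
    finally show ?thesis using Cons2 by simp
  qed
qed




lemma core_bound:
  fixes W M C :: real and a d :: nat
  assumes "a \<ge> 1" "d \<ge> 2" "0 \<le> M" "M \<le> C * real a powr (1/2)" "0 \<le> W" "W \<le> 2"
  shows "W * M / real a ^ d \<le> 2 * C * real a powr (-3/2)"
proof -
  have a1: "real a \<ge> 1" using assms by simp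
  have "real a ^ 2 \<le> real a ^ d" using a1 assms by (intro power_increasing) auto
  then have ad: "real a ^ 2 \<le> real a ^ d" .
  have "W * M / real a ^ d \<le> 2 * M / real a ^ 2"
    using assms ad a1 by (intro frac_le mult_mono) auto
  also have "\<dots> \<le> 2 * (C * real a powr (1/2)) / real a ^ 2"
    using assms a1 by (intro divide_right_mono mult_left_mono) auto
  also have "real a powr (1/2) / real a ^ 2 = real a powr (-3/2)"
  proof -
    have "real a ^ 2 = real a powr (real 2)" using a1 by (subst powr_realpow) auto
    then have "real a powr (1/2) / real a ^ 2 = real a powr (1/2) / real a powr (real 2)" by simp
    also have "\<dots> = real a powr (1/2 - real 2)" by (rule powr_diff[symmetric])
    also have "(1/2 - real 2) = -3/2" by simp
    finally show ?thesis by simp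
  qed
  then have "2 * (C * real a powr (1/2)) / real a ^ 2 = 2 * C * real a powr (-3/2)"
    by (metis mult.assoc times_divide_eq_right)
  finally show ?thesis .
qed

lemma summable_32: "summable (\<lambda>i. K * real (Suc i) powr (-3/2))"
proof -
  have "summable (\<lambda>n. real n powr (-3/2))" by (subst summable_real_powr_iff) auto
  then have "summable (\<lambda>n. real (n + 1) powr (-3/2))"
    using summable_ignore_initial_segment[of _ 1] by blast
  then show ?thesis by (intro summable_mult) simp
qed

lemma quart_half: "1 \<le> a \<Longrightarrow> real a powr (1/4) \<le> real a powr (1/2)"
  by (intro powr_mono) auto

lemma Mtr_tendsto:
  assumes "k \<ge> 2" "\<forall>x\<in>set ks. x \<ge> 1" "\<bar>e\<bar> \<le> 1" "\<forall>x\<in>set es. \<bar>x\<bar> \<le> 1"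
  shows "(\<lambda>N. Mtr N (k#ks) (e#es)) \<longlonglongrightarrow> MMV (k#ks) (e#es)"
proof -
  define t where "t a = (1 + e * (-1) ^ a) / real a ^ k * Mtr (a - 1) ks es" for a
  define C :: real where "C = 8 ^ length ks"
  have eq: "Mtr N (k#ks) (e#es) = (\<Sum>i<N. t (Suc i))" for N
    by (simp add: t_def sum.atLeast1_atMost_eq)
  have "summable (\<lambda>i. t (Suc i))"
  proof (rule summable_comparison_test[OF _ summable_32[of "2 * C"]], intro exI allI impI)
    fix i :: nat
    let ?a = "Suc i"
    have M0: "0 \<le> Mtr (?a - 1) ks es" using assms by (intro Mtr_nonneg) auto
    have "Mtr (?a - 1) ks es \<le> Mtr ?a ks es" using assms by (intro Mtr_mono) auto
    also have "\<dots> \<le> C * real ?a powr (1/4)" unfolding C_def using assms by (intro Mtr_bound) auto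
    also have "\<dots> \<le> C * real ?a powr (1/2)" unfolding C_def by (intro mult_left_mono quart_half) auto
    finally have M1: "Mtr (?a - 1) ks es \<le> C * real ?a powr (1/2)" .
    have t0: "0 \<le> t ?a" unfolding t_def using w_bounds[OF assms(3), of ?a] M0 by auto
    have "t ?a = (1 + e * (-1) ^ ?a) * Mtr (?a - 1) ks es / real ?a ^ k" by (simp add: t_def)
    also have "\<dots> \<le> 2 * C * real ?a powr (-3/2)"
      using w_bounds[OF assms(3), of ?a] M0 M1 assms(1) by (intro core_bound) auto
    finally show "norm (t ?a) \<le> 2 * C * real (Suc i) powr (-3/2)" using t0 by simp
  qed
  then have "(\<lambda>N. \<Sum>i<N. t (Suc i)) \<longlonglongrightarrow> (\<Sum>i. t (Suc i))" by (rule summable_LIMSEQ)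
  then have L: "(\<lambda>N. Mtr N (k#ks) (e#es)) \<longlonglongrightarrow> (\<Sum>i. t (Suc i))" by (simp only: eq)
  then have "MMV (k#ks) (e#es) = (\<Sum>i. t (Suc i))" unfolding MMV_def by (rule limI)
  then show ?thesis using L by simp
qed

definition CT :: "nat list \<Rightarrow> real list \<Rightarrow> nat list \<Rightarrow> real list \<Rightarrow> nat \<Rightarrow> real" where
  "CT ks es ls fs n = Mtr (n - 1) (tl ks) (tl es) * Mst n (tl ls) (tl fs) / real n ^ (hd ks + hd ls)
        * ((1 + hd fs * (-1) ^ n) * (1 + hd es * (-1) ^ n) / 2)"

lemma CMMV_CT: "CMMV ks es ls fs = (\<Sum>i. CT ks es ls fs (Suc i))"
  by (simp add: CMMV_def CT_def Let_def)

lemma CMMV_tendsto: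
  assumes "k0 + l0 \<ge> 2" "\<forall>x\<in>set ks. x \<ge> 1" "\<forall>x\<in>set ls. x \<ge> 1"
    "\<bar>e0\<bar> \<le> 1" "\<bar>f0\<bar> \<le> 1" "\<forall>x\<in>set es. \<bar>x\<bar> \<le> 1" "\<forall>x\<in>set fs. \<bar>x\<bar> \<le> 1"
  shows "(\<lambda>N. \<Sum>b\<in>{1..N}. CT (k0#ks) (e0#es) (l0#ls) (f0#fs) b) \<longlonglongrightarrow> CMMV (k0#ks) (e0#es) (l0#ls) (f0#fs)"
proof -
  define t where "t = CT (k0#ks) (e0#es) (l0#ls) (f0#fs)"
  define C :: real where "C = 8 ^ length ks * 8 ^ length ls"
  have eq: "(\<Sum>b\<in>{1..N}. t b) = (\<Sum>i<N. t (Suc i))" for N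
    by (simp add: sum.atLeast1_atMost_eq)
  have "summable (\<lambda>i. t (Suc i))"
  proof (rule summable_comparison_test[OF _ summable_32[of "2 * C"]], intro exI allI impI)
    fix i :: nat
    let ?a = "Suc i"
    let ?M = "Mtr (?a - 1) ks es * Mst ?a ls fs"
    let ?W = "(1 + f0 * (-1) ^ ?a) * (1 + e0 * (-1) ^ ?a) / 2"
    have A0: "0 \<le> Mtr (?a - 1) ks es" using assms by (intro Mtr_nonneg) auto
    have B0: "0 \<le> Mst ?a ls fs" using assms by (intro Mst_nonneg) auto
    have "Mtr (?a - 1) ks es \<le> Mtr ?a ks es" using assms by (intro Mtr_mono) auto
    also have "\<dots> \<le> 8 ^ length ks * real ?a powr (1/4)" using assms by (intro Mtr_bound) auto
    finally have A1: "Mtr (?a - 1) ks es \<le> 8 ^ length ks * real ?a powr (1/4)" .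
    have B1: "Mst ?a ls fs \<le> 8 ^ length ls * real ?a powr (1/4)" using assms by (intro Mst_bound) auto
    have M0: "0 \<le> ?M" using A0 B0 by simp
    have "?M \<le> (8 ^ length ks * real ?a powr (1/4)) * (8 ^ length ls * real ?a powr (1/4))"
      using A0 B0 A1 B1 by (intro mult_mono) auto
    also have "\<dots> = C * (real ?a powr (1/4) * real ?a powr (1/4))" by (simp add: C_def mult_ac)
    also have "real ?a powr (1/4) * real ?a powr (1/4) = real ?a powr (1/2)"
      by (simp add: powr_add[symmetric])
    finally have M1: "?M \<le> C * real ?a powr (1/2)" .
    have f: "0 \<le> 1 + f0 * (-1) ^ ?a" "1 + f0 * (-1) ^ ?a \<le> 2" using w_bounds[OF assms(5), of ?a] by auto
    have e: "0 \<le> 1 + e0 * (-1) ^ ?a" "1 + e0 * (-1) ^ ?a \<le> 2" using w_bounds[OF assms(4), of ?a] by auto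
    have W0: "0 \<le> ?W" using f e by simp
    have "(1 + f0 * (-1) ^ ?a) * (1 + e0 * (-1) ^ ?a) \<le> 2 * 2" using f e by (intro mult_mono) auto
    then have W1: "?W \<le> 2" by simp
    have "t ?a = ?W * ?M / real ?a ^ (k0 + l0)" unfolding t_def CT_def by (simp only: list.sel) (simp add: field_simps)
    also have "\<dots> \<le> 2 * C * real ?a powr (-3/2)"
      using W0 W1 M0 M1 assms(1) by (intro core_bound) auto
    finally have T1: "t ?a \<le> 2 * C * real ?a powr (-3/2)" .
    have "0 \<le> ?W * ?M / real ?a ^ (k0 + l0)" using W0 M0 by simp
    then have "0 \<le> t ?a" using \<open>t ?a = ?W * ?M / real ?a ^ (k0 + l0)\<close> by simp
    then show "norm (t ?a) \<le> 2 * C * real (Suc i) powr (-3/2)" using T1 by simp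
  qed
  then have "(\<lambda>N. \<Sum>i<N. t (Suc i)) \<longlonglongrightarrow> (\<Sum>i. t (Suc i))" by (rule summable_LIMSEQ)
  then have "(\<lambda>N. \<Sum>b\<in>{1..N}. t b) \<longlonglongrightarrow> (\<Sum>i. t (Suc i))" by (simp only: eq)
  then show ?thesis unfolding t_def CMMV_CT .
qed




lemma pvec_len[simp]: "length (pvec xs) = length xs" by (simp add: pvec_def)
lemma rvec_len[simp]: "length (rvec xs) = length xs" by (simp add: rvec_def)
lemma qvec_len[simp]: "length (qvec xs) = length xs" by (simp add: qvec_def)
lemma pvec_nth: "i < length xs \<Longrightarrow> pvec xs ! i = prod_list (drop i xs)" by (simp add: pvec_def)
lemma rvec_nth: "i < length xs \<Longrightarrow> rvec xs ! i = prod_list (take (Suc i) xs)" by (simp add: rvec_def)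

lemma pvec_Cons: "pvec (x # xs) = prod_list (x # xs) # pvec xs"
  by (rule nth_equalityI) (auto simp: pvec_nth nth_Cons split: nat.split)

lemma pvec_Nil[simp]: "pvec [] = []" by (simp add: pvec_def)
lemma rvec_Nil[simp]: "rvec [] = []" by (simp add: rvec_def)

definition pm1 :: "real list \<Rightarrow> bool" where "pm1 xs = (\<forall>x\<in>set xs. x = 1 \<or> x = -1)"

lemma prod_pm1: "pm1 xs \<Longrightarrow> prod_list xs = 1 \<or> prod_list xs = -1"
  by (induction xs) (auto simp: pm1_def)

lemma pm1_abs: "pm1 xs \<Longrightarrow> \<forall>x\<in>set xs. \<bar>x\<bar> \<le> 1" by (auto simp: pm1_def)

lemma pm1_take: "pm1 xs \<Longrightarrow> pm1 (take i xs)" by (auto simp: pm1_def dest: in_set_takeD)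
lemma pm1_drop: "pm1 xs \<Longrightarrow> pm1 (drop i xs)" by (auto simp: pm1_def dest: in_set_dropD)

lemma pm1_pvec: "pm1 xs \<Longrightarrow> pm1 (pvec xs)"
  unfolding pm1_def[of "pvec xs"] by (auto simp: pvec_def intro!: prod_pm1 pm1_drop)
lemma pm1_rvec: "pm1 xs \<Longrightarrow> pm1 (rvec xs)"
  unfolding pm1_def[of "rvec xs"] by (auto simp: rvec_def intro!: prod_pm1 pm1_take)
lemma pm1_qvec: "pm1 xs \<Longrightarrow> pm1 (qvec xs)"
  using pm1_rvec by (simp add: qvec_def pm1_def)
lemma pm1_map: "pm1 xs \<Longrightarrow> (c = 1 \<or> c = -1) \<Longrightarrow> pm1 (map (\<lambda>x. c * x) xs)"
  by (auto simp: pm1_def)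
lemma pm1_uminus: "pm1 xs \<Longrightarrow> pm1 (map uminus xs)"
  by (auto simp: pm1_def)
lemma pm1_append: "pm1 xs \<Longrightarrow> pm1 ys \<Longrightarrow> pm1 (xs @ ys)" by (auto simp: pm1_def)
lemma pm1_one[simp]: "pm1 [1]" "pm1 [-1]" by (auto simp: pm1_def)

lemma drop_rvec:
  assumes "j < length eps"
  shows "drop j (rvec eps) = map (\<lambda>x. prod_list (take (Suc j) eps) * x) (1 # rvec (drop (Suc j) eps))"
proof (rule nth_equalityI)
  show "length (drop j (rvec eps)) = length (map (\<lambda>x. prod_list (take (Suc j) eps) * x) (1 # rvec (drop (Suc j) eps)))"
    using assms by simp
next
  fix i assume i: "i < length (drop j (rvec eps))"
  show "drop j (rvec eps) ! i = map (\<lambda>x. prod_list (take (Suc j) eps) * x) (1 # rvec (drop (Suc j) eps)) ! i"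
  proof (cases i)
    case 0 then show ?thesis using i assms by (simp add: rvec_nth)
  next
    case (Suc i')
    have "take (Suc j + Suc i') eps = take (Suc j) eps @ take (Suc i') (drop (Suc j) eps)"
      by (rule take_add)
    then have "prod_list (take (Suc (j + Suc i')) eps) = prod_list (take (Suc j) eps) * prod_list (take (Suc i') (drop (Suc j) eps))"
      by simp
    then show ?thesis using i assms Suc by (simp add: rvec_nth)
  qed
qed

lemma take_rvec:
  assumes "j < length eps" "pm1 eps"
  shows "map (\<lambda>x. h * x) (take j (rvec eps)) =
     map (\<lambda>x. (h * prod_list (take (Suc j) eps)) * x) (tl (pvec (take (Suc j) eps)))"
proof (rule nth_equalityI)
  show "length (map (\<lambda>x. h * x) (take j (rvec eps))) = length (map (\<lambda>x. (h * prod_list (take (Suc j) eps)) * x) (tl (pvec (take (Suc j) eps))))"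
    using assms by simp
next
  fix i assume i: "i < length (map (\<lambda>x. h * x) (take j (rvec eps)))"
  then have ij: "i < j" by simp
  define A where "A = prod_list (take (Suc i) eps)"
  define D where "D = prod_list (drop (Suc i) (take (Suc j) eps))"
  have "take (Suc j) eps = take (Suc i) (take (Suc j) eps) @ drop (Suc i) (take (Suc j) eps)" by (rule append_take_drop_id[symmetric])
  also have "take (Suc i) (take (Suc j) eps) = take (Suc i) eps" using ij by (simp add: min_def)
  finally have P: "prod_list (take (Suc j) eps) = A * D" unfolding A_def D_def by (metis prod_list.append)
  have "pm1 (drop (Suc i) (take (Suc j) eps))" using assms by (intro pm1_drop pm1_take)
  then have D2: "D * D = 1" unfolding D_def using prod_pm1 by fastforce
  have tlnth: "tl (pvec (take (Suc j) eps)) ! i = D"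
    using ij assms by (simp add: nth_tl pvec_nth D_def)
  have "map (\<lambda>x. h * x) (take j (rvec eps)) ! i = h * A" using ij assms by (simp add: rvec_nth A_def)
  also have "\<dots> = h * prod_list (take (Suc j) eps) * D" using P D2 by (simp add: mult_ac)
  also have "\<dots> = map (\<lambda>x. (h * prod_list (take (Suc j) eps)) * x) (tl (pvec (take (Suc j) eps))) ! i"
    using ij assms tlnth by simp
  finally show "map (\<lambda>x. h * x) (take j (rvec eps)) ! i = map (\<lambda>x. (h * prod_list (take (Suc j) eps)) * x) (tl (pvec (take (Suc j) eps))) ! i" .
qed

lemma combine:
  fixes X Xp Xm Y Yp Ym T D s h P c :: real
  assumes "s = 1 \<or> s = -1" "h = 1 \<or> h = -1" "c = 1 \<or> c = -1" "c = h * P"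
    "c = 1 \<Longrightarrow> X = Xp \<and> Y = Yp" "c = -1 \<Longrightarrow> X = Xm \<and> Y = Ym"
  shows "(1 + h * s) / D * T * (X * Y) =
     Xp * (T * Yp / D * ((1 + P * s) * (1 + h * s) / 2)) +
     Xm * (T * Ym / D * ((1 + (-P) * s) * (1 + h * s) / 2))"
proof -
  have P: "P = c * h" using assms(2,4) by auto
  show ?thesis using assms(1,2,3,5,6) unfolding P by (elim disjE) (auto simp: field_simps)
qed




lemma pvec_eq_Nil[simp]: "pvec xs = [] \<longleftrightarrow> xs = []"
  by (metis length_0_conv pvec_len)

lemma hd_pvec: "xs \<noteq> [] \<Longrightarrow> hd (pvec xs) = prod_list xs"
  by (cases xs) (auto simp: pvec_Cons)

lemma Mtr_tendsto2:
  assumes "xs \<noteq> []" "es \<noteq> []" "hd xs \<ge> 2" "\<forall>x\<in>set xs. x \<ge> 1" "\<forall>e\<in>set es. \<bar>e\<bar> \<le> 1"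
  shows "(\<lambda>N. Mtr N xs es) \<longlonglongrightarrow> MMV xs es"
  using assms Mtr_tendsto by (cases xs; cases es) auto

lemma CMMV_tendsto2:
  assumes "ks \<noteq> []" "es \<noteq> []" "ls \<noteq> []" "fs \<noteq> []" "hd ks + hd ls \<ge> 2"
    "\<forall>x\<in>set (tl ks). x \<ge> 1" "\<forall>x\<in>set (tl ls). x \<ge> 1"
    "\<forall>x\<in>set es. \<bar>x\<bar> \<le> 1" "\<forall>x\<in>set fs. \<bar>x\<bar> \<le> 1"
  shows "(\<lambda>N. \<Sum>b\<in>{1..N}. CT ks es ls fs b) \<longlonglongrightarrow> CMMV ks es ls fs"
  using assms CMMV_tendsto by (cases ks; cases es; cases ls; cases fs) auto

theorem mainTheorem11:
  fixes k m :: "nat list" and eta eps :: "real list"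
  assumes "k \<noteq> []" and "m \<noteq> []"
    and "\<forall>x\<in>set k. x \<ge> 1" and "\<forall>x\<in>set m. x \<ge> 1"
    and "last m \<ge> 2"
    and "length eta = length k" and "length eps = length m"
    and "\<forall>x\<in>set eta. x = 1 \<or> x = -1" and "\<forall>x\<in>set eps. x = 1 \<or> x = -1"
  shows "MMV (rev m @ (hd k + 1) # tl k)
             (map (\<lambda>x. prod_list eta * x) (qvec eps) @ pvec eta)
       = (\<Sum>j\<in>{1..length m}. (-1) ^ (j - 1) *
            MMV (rev (drop (j - 1) m)) (qvec (drop j eps) @ [1]) *
            CMMV k (pvec eta) (1 # take (j - 1) m) (pvec (take j eps)))
       + (\<Sum>j\<in>{1..length m}. (-1) ^ (j - 1) *
            MMV (rev (drop (j - 1) m)) (map uminus (qvec (drop j eps)) @ [-1]) *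
            CMMV k (pvec eta) (1 # take (j - 1) m) (map uminus (pvec (take j eps))))
       + 2 * (-1) ^ length m *
            CMMV k (pvec eta) (1 # m) (0 # map (\<lambda>x. prod_list eta * x) (rvec eps))"
proof -
  define p where "p = length m"
  define h where "h = prod_list eta"
  define pv where "pv = pvec eta"
  define \<sigma> where "\<sigma> = map (\<lambda>x. prod_list eta * x) (rvec eps)"
  obtain k0 k' where kk: "k = k0 # k'" using assms(1) by (cases k) auto
  have pmeta: "pm1 eta" and pmeps: "pm1 eps" using assms(8,9) by (auto simp: pm1_def)
  have h1: "h = 1 \<or> h = -1" using prod_pm1[OF pmeta] h_def by auto
  have eta_ne: "eta \<noteq> []" using assms(1,6) by auto
  have pv_eq: "pv = h # tl pv" using eta_ne by (cases eta) (simp_all add: pv_def h_def pvec_Cons)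
  have pmpv: "pm1 pv" unfolding pv_def by (rule pm1_pvec[OF pmeta])
  have pm\<sigma>: "pm1 \<sigma>" unfolding \<sigma>_def h_def[symmetric] using h1 by (intro pm1_map pm1_rvec pmeps)
  have len\<sigma>: "length \<sigma> = p" using assms(7) by (simp add: \<sigma>_def p_def)
  have p_pos: "p > 0" using assms(2) by (simp add: p_def)
  have m1: "\<forall>x\<in>set m. x \<ge> 1" and k1: "\<forall>x\<in>set k. x \<ge> 1" using assms(3,4) by auto
  have lastm: "last m \<ge> 2" using assms(5) .
  define LK where "LK = rev m @ (k0 + 1) # k'"
  define LS where "LS = rev \<sigma> @ h # tl pv"
  have LS_eq: "map (\<lambda>x. prod_list eta * x) (qvec eps) @ pvec eta = LS"
    unfolding LS_def \<sigma>_def qvec_def pv_def[symmetric] by (subst pv_eq) (simp add: rev_map)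
  have LK_eq: "rev m @ (hd k + 1) # tl k = LK" by (simp add: LK_def kk)
  define P where "P j = prod_list (take (Suc j) eps)" for j
  define c where "c j = h * P j" for j
  have c1: "c j = 1 \<or> c j = -1" for j
  proof -
    have "P j = 1 \<or> P j = -1" unfolding P_def by (intro prod_pm1 pm1_take pmeps)
    then show ?thesis using h1 by (auto simp: c_def)
  qed
  have rev_drop\<sigma>: "rev (drop j \<sigma>) = map (\<lambda>x. c j * x) (qvec (drop (Suc j) eps) @ [1])" if "j < p" for j
  proof -
    have "drop j \<sigma> = map (\<lambda>x. h * x) (drop j (rvec eps))" by (simp add: \<sigma>_def h_def drop_map)
    also have "\<dots> = map (\<lambda>x. c j * x) (1 # rvec (drop (Suc j) eps))"
      using that assms(7) by (simp add: drop_rvec p_def c_def P_def mult.assoc)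
    finally show ?thesis by (simp add: qvec_def rev_map)
  qed
  have take\<sigma>: "take j \<sigma> = map (\<lambda>x. c j * x) (tl (pvec (take (Suc j) eps)))" if "j < p" for j
  proof -
    have "take j \<sigma> = map (\<lambda>x. h * x) (take j (rvec eps))" by (simp add: \<sigma>_def h_def take_map)
    also have "\<dots> = map (\<lambda>x. c j * x) (tl (pvec (take (Suc j) eps)))"
      using take_rvec[of j eps h] that assms(7) pmeps by (simp add: p_def c_def P_def)
    finally show ?thesis .
  qed
  have hdP: "hd (pvec (take (Suc j) eps)) = P j" if "j < p" for j
    using that assms(7) by (subst hd_pvec) (auto simp: P_def p_def)
  have hdPm: "hd (map uminus (pvec (take (Suc j) eps))) = - P j" if "j < p" for j
  proof -
    have "length (pvec (take (Suc j) eps)) > 0" using that assms(7) by (simp add: p_def)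
    then have "pvec (take (Suc j) eps) \<noteq> []" by (metis list.size(3) less_irrefl)
    then show ?thesis using hdP[OF that] by (simp add: hd_map)
  qed
  define T where "T b = Mtr (b - 1) k' (tl pv)" for b
  define Xp where "Xp N j = Mtr N (rev (drop j m)) (qvec (drop (Suc j) eps) @ [1])" for N j
  define Xm where "Xm N j = Mtr N (rev (drop j m)) (map uminus (qvec (drop (Suc j) eps)) @ [-1])" for N j
  define Cp where "Cp j b = CT k pv (1 # take j m) (pvec (take (Suc j) eps)) b" for j b
  define Cm where "Cm j b = CT k pv (1 # take j m) (map uminus (pvec (take (Suc j) eps))) b" for j b
  define C0 where "C0 b = CT k pv (1 # m) (0 # \<sigma>) b" for b
  define G where "G b = (1 + h * (-1) ^ b) / real b ^ (k0 + 1) * T b" for b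
  have hdpv: "hd pv = h" using pv_eq by (metis list.sel(1))
  have per_j: "G b * (Mtr N (rev (drop j m)) (rev (drop j \<sigma>)) * Mst b (take j m) (take j \<sigma>))
      = Xp N j * Cp j b + Xm N j * Cm j b" if "j < p" for N j b
  proof -
    have s1: "(-1::real) ^ b = 1 \<or> (-1::real) ^ b = -1" by (cases "even b") auto
    have "G b * (Mtr N (rev (drop j m)) (rev (drop j \<sigma>)) * Mst b (take j m) (take j \<sigma>)) =
       Xp N j * (T b * Mst b (take j m) (tl (pvec (take (Suc j) eps))) / real b ^ (k0 + 1) * ((1 + P j * (-1) ^ b) * (1 + h * (-1) ^ b) / 2)) +
       Xm N j * (T b * Mst b (take j m) (tl (map uminus (pvec (take (Suc j) eps)))) / real b ^ (k0 + 1) * ((1 + (- P j) * (-1) ^ b) * (1 + h * (-1) ^ b) / 2))"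
      unfolding G_def
    proof (rule combine[OF s1 h1 c1])
      show "c j = h * P j" by (simp add: c_def)
    next
      assume "c j = 1"
      then show "Mtr N (rev (drop j m)) (rev (drop j \<sigma>)) = Xp N j \<and>
          Mst b (take j m) (take j \<sigma>) = Mst b (take j m) (tl (pvec (take (Suc j) eps)))"
        using rev_drop\<sigma>[OF that] take\<sigma>[OF that] by (simp add: Xp_def)
    next
      assume "c j = -1"
      then show "Mtr N (rev (drop j m)) (rev (drop j \<sigma>)) = Xm N j \<and>
          Mst b (take j m) (take j \<sigma>) = Mst b (take j m) (tl (map uminus (pvec (take (Suc j) eps))))"
        using rev_drop\<sigma>[OF that] take\<sigma>[OF that] by (simp add: Xm_def map_tl)
    qed
    also have "\<dots> = Xp N j * Cp j b + Xm N j * Cm j b"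
      unfolding Cp_def Cm_def CT_def T_def using hdP[OF that] hdPm[OF that] hdpv
      by (simp add: kk)
    finally show ?thesis .
  qed
  have per_0: "G b * ((-1) ^ p * Mst b m \<sigma>) = (-1) ^ p * (2 * C0 b)" for b
    unfolding G_def C0_def CT_def T_def using hdpv by (simp add: kk)
  define RN where "RN N =
      (\<Sum>j<p. (-1) ^ j * Xp N j * (\<Sum>b\<in>{1..N}. Cp j b))
    + (\<Sum>j<p. (-1) ^ j * Xm N j * (\<Sum>b\<in>{1..N}. Cm j b))
    + 2 * (-1) ^ p * (\<Sum>b\<in>{1..N}. C0 b)" for N
  have FI: "Mtr N LK LS = RN N" for N
  proof -
    have lenr: "length (rev m) = length (rev \<sigma>)" using len\<sigma> by (simp add: p_def)
    have "Mtr N LK LS = (\<Sum>b\<in>{0<..N}. (1 + h * (-1) ^ b) / real b ^ (k0 + 1) * Mgt (b - 1) 0 k' (tl pv) * Mgt N b (rev m) (rev \<sigma>))"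
      unfolding Mtr_Mgt LK_def LS_def by (rule Mgt_append[OF lenr])
    also have "\<dots> = (\<Sum>b\<in>{1..N}. G b * ((\<Sum>j<p. (-1) ^ j * Mtr N (rev (drop j m)) (rev (drop j \<sigma>)) * Mst b (take j m) (take j \<sigma>)) + (-1) ^ p * Mst b m \<sigma>))"
    proof (rule sum.cong)
      show "{0<..N} = {1..N}" by auto
    next
      fix b assume "b \<in> {1..N}"
      then have bN: "b \<le> N" by simp
      have lms: "length m = length \<sigma>" using len\<sigma> by (simp add: p_def)
      show "(1 + h * (-1) ^ b) / real b ^ (k0 + 1) * Mgt (b - 1) 0 k' (tl pv) * Mgt N b (rev m) (rev \<sigma>) =
         G b * ((\<Sum>j<p. (-1) ^ j * Mtr N (rev (drop j m)) (rev (drop j \<sigma>)) * Mst b (take j m) (take j \<sigma>)) + (-1) ^ p * Mst b m \<sigma>)"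
        unfolding Mgt_tail[OF lms bN] G_def T_def Mtr_Mgt p_def by simp
    qed
    also have "\<dots> = (\<Sum>b\<in>{1..N}. (\<Sum>j<p. (-1) ^ j * (Xp N j * Cp j b + Xm N j * Cm j b)) + (-1) ^ p * (2 * C0 b))"
    proof (rule sum.cong[OF refl])
      fix b
      have "G b * ((\<Sum>j<p. (-1) ^ j * Mtr N (rev (drop j m)) (rev (drop j \<sigma>)) * Mst b (take j m) (take j \<sigma>)) + (-1) ^ p * Mst b m \<sigma>)
         = (\<Sum>j<p. (-1) ^ j * (G b * (Mtr N (rev (drop j m)) (rev (drop j \<sigma>)) * Mst b (take j m) (take j \<sigma>)))) + G b * ((-1) ^ p * Mst b m \<sigma>)"
        by (simp add: distrib_left sum_distrib_left mult_ac)
      also have "\<dots> = (\<Sum>j<p. (-1) ^ j * (Xp N j * Cp j b + Xm N j * Cm j b)) + (-1) ^ p * (2 * C0 b)"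
        using per_j per_0 by simp
      finally show "G b * ((\<Sum>j<p. (-1) ^ j * Mtr N (rev (drop j m)) (rev (drop j \<sigma>)) * Mst b (take j m) (take j \<sigma>)) + (-1) ^ p * Mst b m \<sigma>)
         = (\<Sum>j<p. (-1) ^ j * (Xp N j * Cp j b + Xm N j * Cm j b)) + (-1) ^ p * (2 * C0 b)" .
    qed
    also have "\<dots> = RN N"
    proof -
      have "(\<Sum>b\<in>{1..N}. (\<Sum>j<p. (-1) ^ j * (Xp N j * Cp j b + Xm N j * Cm j b)) + (-1) ^ p * (2 * C0 b))
          = (\<Sum>j<p. \<Sum>b\<in>{1..N}. (-1) ^ j * (Xp N j * Cp j b + Xm N j * Cm j b)) + (\<Sum>b\<in>{1..N}. (-1) ^ p * (2 * C0 b))"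
        by (simp only: sum.distrib sum.swap[of _ "{1..N}" "{..<p}"])
      also have "\<dots> = RN N"
        by (simp add: RN_def sum.distrib sum_distrib_left distrib_left mult_ac)
      finally show ?thesis .
    qed
    finally show ?thesis .
  qed
  have pmS: "pm1 (qvec (drop (Suc j) eps) @ [1])" "pm1 (map uminus (qvec (drop (Suc j) eps)) @ [-1])" for j
    using pmeps by (auto intro!: pm1_append pm1_qvec pm1_drop pm1_uminus)
  have hdS: "rev (drop j m) \<noteq> [] \<and> hd (rev (drop j m)) \<ge> 2 \<and> (\<forall>x\<in>set (rev (drop j m)). x \<ge> 1)" if "j < p" for j
    using that lastm m1 by (auto simp: p_def hd_rev dest: in_set_dropD)
  have limXp: "(\<lambda>N. Xp N j) \<longlonglongrightarrow> MMV (rev (drop j m)) (qvec (drop (Suc j) eps) @ [1])" if "j < p" for j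
    unfolding Xp_def using hdS[OF that] pm1_abs[OF pmS(1)] by (intro Mtr_tendsto2) auto
  have limXm: "(\<lambda>N. Xm N j) \<longlonglongrightarrow> MMV (rev (drop j m)) (map uminus (qvec (drop (Suc j) eps)) @ [-1])" if "j < p" for j
    unfolding Xm_def using hdS[OF that] pm1_abs[OF pmS(2)] by (intro Mtr_tendsto2) auto
  have pmF: "pm1 (pvec (take (Suc j) eps))" "pm1 (map uminus (pvec (take (Suc j) eps)))" for j
    using pmeps by (auto intro!: pm1_pvec pm1_take pm1_uminus)
  have Fne: "pvec (take (Suc j) eps) \<noteq> []" "map uminus (pvec (take (Suc j) eps)) \<noteq> []" if "j < p" for j
    using that assms(7) by (auto simp: p_def)
  have tlk: "\<forall>x\<in>set (tl k). x \<ge> 1" using k1 by (simp add: kk)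
  have tlL: "\<forall>x\<in>set (take j m). x \<ge> 1" for j using m1 by (auto dest: in_set_takeD)
  have pvne: "pv \<noteq> []" using pv_eq by (metis list.simps(3))
  have limCp: "(\<lambda>N. \<Sum>b\<in>{1..N}. Cp j b) \<longlonglongrightarrow> CMMV k pv (1 # take j m) (pvec (take (Suc j) eps))" if "j < p" for j
    unfolding Cp_def using Fne[OF that] pm1_abs[OF pmF(1)] pm1_abs[OF pmpv] pvne k1 tlk tlL assms(1)
    by (intro CMMV_tendsto2) (auto simp: kk)
  have limCm: "(\<lambda>N. \<Sum>b\<in>{1..N}. Cm j b) \<longlonglongrightarrow> CMMV k pv (1 # take j m) (map uminus (pvec (take (Suc j) eps)))" if "j < p" for j
    unfolding Cm_def using Fne[OF that] pm1_abs[OF pmF(2)] pm1_abs[OF pmpv] pvne k1 tlk tlL assms(1)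
    by (intro CMMV_tendsto2) (auto simp: kk)
  have limC0: "(\<lambda>N. \<Sum>b\<in>{1..N}. C0 b) \<longlonglongrightarrow> CMMV k pv (1 # m) (0 # \<sigma>)"
    unfolding C0_def using pm1_abs[OF pm\<sigma>] pm1_abs[OF pmpv] pvne k1 tlk m1 assms(1)
    by (intro CMMV_tendsto2) (auto simp: kk)
  define RHS where "RHS =
      (\<Sum>j<p. (-1) ^ j * MMV (rev (drop j m)) (qvec (drop (Suc j) eps) @ [1]) * CMMV k pv (1 # take j m) (pvec (take (Suc j) eps)))
    + (\<Sum>j<p. (-1) ^ j * MMV (rev (drop j m)) (map uminus (qvec (drop (Suc j) eps)) @ [-1]) * CMMV k pv (1 # take j m) (map uminus (pvec (take (Suc j) eps))))
    + 2 * (-1) ^ p * CMMV k pv (1 # m) (0 # \<sigma>)"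
  have limR: "RN \<longlonglongrightarrow> RHS"
    unfolding RN_def[abs_def] RHS_def
    by (intro tendsto_add tendsto_sum tendsto_mult tendsto_const limXp limXm limCp limCm limC0) auto
  have LKne: "LK \<noteq> []" "LS \<noteq> []" by (simp_all add: LK_def LS_def)
  have hdLK: "hd LK \<ge> 2" using assms(2) lastm by (simp add: LK_def hd_rev)
  have LK1: "\<forall>x\<in>set LK. x \<ge> 1" using m1 k1 by (auto simp: LK_def kk)
  have pmLS: "pm1 LS" unfolding LS_def using pm\<sigma> pmpv pv_eq
    by (auto simp: pm1_def)
  have limL: "(\<lambda>N. Mtr N LK LS) \<longlonglongrightarrow> MMV LK LS"
    using LKne hdLK LK1 pm1_abs[OF pmLS] by (intro Mtr_tendsto2) auto
  have "MMV LK LS = RHS"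
    using limL limR FI by (metis (no_types) LIMSEQ_unique ext)
  then have final: "MMV LK LS = RHS" .
  have reidx: "(\<Sum>j\<in>{1..length m}. f j) = (\<Sum>j<p. f (Suc j))" for f :: "nat \<Rightarrow> real"
    by (simp add: sum.atLeast1_atMost_eq p_def)
  show ?thesis
    unfolding LS_eq LK_eq reidx
    using final unfolding RHS_def
    by (simp add: pv_def \<sigma>_def p_def)
qed


end
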